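(* Let $x,y$ be real numbers with $y\neq 0$ such that either $x/y> 1$ or $x/y\le -(\sqrt2+1)^2$. Then $$\sum_{k = 1}^\infty \frac{(27xy)^k }{k(x + y)^{2k} \binom{3k}k} = \frac{\sqrt[3]{xy} }{x - y}\left(2\sqrt 3\big(\sqrt[3]{x} + \sqrt[3]{y} \big)\arctan \bigg( \frac{\sqrt 3\sqrt[3]{y}}{2\sqrt[3]{x} - \sqrt[3]{y} } \bigg)+ \big(\sqrt[3]{x} - \sqrt[3]{y} \big)\log \bigg( \frac{x + y}{\big(\sqrt[3]{x} + \sqrt[3]{y} \big)^3 } \bigg)\right).$$
   Context: $\sqrt[3]{t}$ denotes the real cube root of the real number $t$ (negative for $t<0$). *)

theory Defs
  imports "HOL-Analysis.Analysis"
begin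

end

theory Submission
  imports Defs "HOL-Real_Asymp.Real_Asymp"
begin



lemma beta_nat:
  fixes j :: nat
  shows "((\<lambda>t::real. t ^ j * (1 - t) ^ (2 * Suc j)) has_integral
          (1 / (real (Suc j) * real ((3 * Suc j) choose (Suc j))))) {0..1}"
proof -
  have B: "((\<lambda>t. t powr (real (Suc j) - 1) * (1 - t) powr (real (2 * Suc j + 1) - 1))
      has_integral Beta (real (Suc j)) (real (2 * Suc j + 1))) {0<..<1}"
    using has_integral_Beta_real[of "real (Suc j)" "real (2 * Suc j + 1)"]
    by (simp add: has_integral_Icc_iff_Ioo)
  have eq: "Beta (real (Suc j)) (real (2 * Suc j + 1)) = 1 / (real (Suc j) * real ((3 * Suc j) choose (Suc j)))"
  proof -
    have g1: "Gamma (real (Suc j)) = fact j" using Gamma_fact[of j] by (simp add: add.commute)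
    have g2: "Gamma (real (2 * Suc j + 1)) = fact (2 * Suc j)" using Gamma_fact[of "2 * Suc j"] by (simp add: add.commute)
    have g3: "Gamma (real (Suc j) + real (2 * Suc j + 1)) = fact (3 * Suc j)"
      using Gamma_fact[of "3 * Suc j"] by (simp add: add.commute algebra_simps)
    have c: "real ((3 * Suc j) choose (Suc j)) = fact (3 * Suc j) / (fact (Suc j) * fact (2 * Suc j))"
      by (subst binomial_fact) auto
    show ?thesis unfolding Beta_def g1 g2 g3 c
      by (simp add: field_simps del: of_nat_Suc)
  qed
  have "((\<lambda>t::real. t ^ j * (1 - t) ^ (2 * Suc j)) has_integral
          (1 / (real (Suc j) * real ((3 * Suc j) choose (Suc j))))) {0<..<1}"
    apply (rule has_integral_spike_finite[of "{}", OF _ _ B[unfolded eq]])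
     apply simp
  proof -
    fix x :: real assume "x \<in> {0<..<1} - {}"
    then have x: "0 < x" "0 < 1 - x" by auto
    have e1: "real (Suc j) - 1 = real j" by simp
    have e2: "real (2 * Suc j + 1) - 1 = real (2 * Suc j)" by simp
    show "x ^ j * (1 - x) ^ (2 * Suc j) = x powr (real (Suc j) - 1) * (1 - x) powr (real (2 * Suc j + 1) - 1)"
      unfolding e1 e2 using x by (simp add: powr_realpow del: of_nat_Suc)
  qed
  then show ?thesis by (simp add: has_integral_Icc_iff_Ioo)
qed


lemma hi_S: "((f::real\<Rightarrow>real) has_integral y) ({0..1} - {1/3}) \<longleftrightarrow> (f has_integral y) {0..1}"
  by (rule has_integral_spike_set_eq; rule negligible_subset[OF negligible_sing[of "1/3::real"]]) auto

lemma p_bound: fixes t :: real assumes "0 \<le> t" "t \<le> 1"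
  shows "0 \<le> t*(1-t)^2" "t*(1-t)^2 \<le> 4/27" "t \<noteq> 1/3 \<Longrightarrow> t*(1-t)^2 < 4/27"
proof -
  show "0 \<le> t*(1-t)^2" using assms by simp
  have e: "4/27 - t*(1-t)^2 = (4 - 3*t)*(3*t-1)^2/27" by (simp add: power2_eq_square field_simps)
  have "(4 - 3*t)*(3*t-1)^2 \<ge> 0" using assms by simp
  then show "t*(1-t)^2 \<le> 4/27" using e by linarith
  assume "t \<noteq> 1/3"
  then have "(3*t-1)^2 > 0" by simp
  then have "(4 - 3*t)*(3*t-1)^2 > 0" using assms by simp
  then show "t*(1-t)^2 < 4/27" using e by linarith
qed

lemma series_integral:
  fixes z :: real
  assumes z1: "-27/4 \<le> z" and z2: "z < 27/4"
    and g: "((\<lambda>t. z * (1-t)^2 / (1 - z * t * (1-t)^2)) has_integral I) {0..1}"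
  shows "(\<lambda>n. z^(Suc n) / (real (Suc n) * real ((3 * Suc n) choose (Suc n)))) sums I"
proof -
  define S where "S = {0..1::real} - {1/3}"
  define g where "g t = z * (1-t)^2 / (1 - z * t * (1-t)^2)" for t :: real
  define f where "f n t = (\<Sum>k<n. z^(Suc k) * (t^k * (1-t)^(2 * Suc k)))" for n t
  define a where "a k = z^(Suc k) / (real (Suc k) * real ((3 * Suc k) choose (Suc k)))" for k
  define \<delta> where "\<delta> = min 1 (1 - 4*z/27)"
  have \<delta>: "\<delta> > 0" unfolding \<delta>_def using z2 by auto
  have w1: "1 - z * (t*(1-t)^2) \<ge> \<delta>" if t: "t \<in> {0..1}" for t
  proof (cases "z \<le> 0")
    case True
    then have "z * (t*(1-t)^2) \<le> 0" using p_bound(1)[of t] t by (simp add: mult_nonpos_nonneg)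
    then show ?thesis unfolding \<delta>_def by linarith
  next
    case False
    then have "z * (t*(1-t)^2) \<le> z * (4/27)" using p_bound(2)[of t] t by (intro mult_left_mono) auto
    then show ?thesis unfolding \<delta>_def by linarith
  qed
  have wabs: "\<bar>z * (t*(1-t)^2)\<bar> \<le> 1" if t: "t \<in> {0..1}" for t
  proof -
    have "\<bar>z * (t*(1-t)^2)\<bar> = \<bar>z\<bar> * (t*(1-t)^2)" using p_bound(1)[of t] t by (simp add: abs_mult)
    also have "\<dots> \<le> (27/4) * (4/27)" using p_bound(1,2)[of t] t z1 z2 by (intro mult_mono) auto
    finally show ?thesis by simp
  qed
  have wlt: "\<bar>z * (t*(1-t)^2)\<bar> < 1" if t: "t \<in> S" for t
  proof -
    have t01: "t \<in> {0..1}" "t \<noteq> 1/3" using t unfolding S_def by auto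
    have "\<bar>z * (t*(1-t)^2)\<bar> = \<bar>z\<bar> * (t*(1-t)^2)" using p_bound(1)[of t] t01 by (simp add: abs_mult)
    also have "\<dots> \<le> (27/4) * (t*(1-t)^2)" using p_bound(1)[of t] t01 z1 z2 by (intro mult_right_mono) auto
    also have "\<dots> < (27/4) * (4/27)" using p_bound(3)[of t] t01 by (intro mult_strict_left_mono) auto
    finally show ?thesis by simp
  qed
  have fgeom: "f n t = z * (1-t)^2 * (\<Sum>k<n. (z * (t*(1-t)^2))^k)" for n t
    unfolding f_def sum_distrib_left
  proof (rule sum.cong)
    fix k assume "k \<in> {..<n}"
    have e: "(1-t)^(2*Suc k) = (1-t)^2 * ((1-t)^2)^k" by (simp only: power_mult power_Suc)
    show "z^(Suc k) * (t^k * (1-t)^(2*Suc k)) = z * (1-t)^2 * (z * (t*(1-t)^2))^k"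
      unfolding e power_mult_distrib power_Suc[of z] by (simp only: ac_simps)
  qed simp
  have fint: "((f n) has_integral (\<Sum>k<n. a k)) {0..1}" for n
  proof -
    have fk: "((\<lambda>t. z^(Suc k) * (t^k * (1-t)^(2*Suc k))) has_integral a k) {0..1}" for k
      using has_integral_mult_right[OF beta_nat[of k], of "z^(Suc k)"] unfolding a_def by simp
    show ?thesis unfolding f_def[abs_def] by (rule has_integral_sum) (simp_all only: fk finite_lessThan)
  qed
  have bound: "norm (f n t) \<le> \<bar>z\<bar> * (2 / \<delta>)" if t: "t \<in> S" for n t
  proof -
    define w where "w = z * (t*(1-t)^2)"
    have t01: "t \<in> {0..1}" using t unfolding S_def by auto
    have w1': "1 - w \<ge> \<delta>" using w1[OF t01] unfolding w_def .
    have wa: "\<bar>w\<bar> \<le> 1" using wabs[OF t01] unfolding w_def .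
    have "(\<Sum>k<n. w^k) = (1 - w^n) / (1 - w)"
      using w1' \<delta> by (simp add: sum_gp_strict)
    moreover have "\<bar>1 - w^n\<bar> \<le> 2"
    proof -
      have "\<bar>w^n\<bar> \<le> 1" unfolding power_abs using wa by (intro power_le_one) auto
      then show ?thesis by linarith
    qed
    ultimately have sb: "\<bar>\<Sum>k<n. w^k\<bar> \<le> 2 / \<delta>"
      using w1' \<delta> by (auto simp: abs_div intro!: frac_le)
    have q: "\<bar>(1-t)^2\<bar> \<le> 1" using t01 by (auto intro!: power_le_one)
    have "norm (f n t) = \<bar>z\<bar> * \<bar>(1-t)^2\<bar> * \<bar>\<Sum>k<n. w^k\<bar>"
      unfolding fgeom w_def by (simp add: abs_mult)
    also have "\<dots> \<le> \<bar>z\<bar> * 1 * (2 / \<delta>)"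
      using q sb by (intro mult_mono) auto
    finally show ?thesis by simp
  qed
  have conv: "(\<lambda>n. f n t) \<longlonglongrightarrow> g t" if t: "t \<in> S" for t
  proof -
    have "(\<lambda>k. (z * (t*(1-t)^2))^k) sums (1 / (1 - z * (t*(1-t)^2)))"
      by (rule geometric_sums) (use wlt[OF t] in simp)
    then have "(\<lambda>n. \<Sum>k<n. (z * (t*(1-t)^2))^k) \<longlonglongrightarrow> 1 / (1 - z * (t*(1-t)^2))"
      by (simp add: sums_def)
    then have "(\<lambda>n. z * (1-t)^2 * (\<Sum>k<n. (z * (t*(1-t)^2))^k)) \<longlonglongrightarrow> z * (1-t)^2 * (1 / (1 - z * (t*(1-t)^2)))"
      by (intro tendsto_intros)
    then show ?thesis unfolding fgeom g_def by (simp add: mult.assoc)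
  qed
  have hint: "(\<lambda>t. \<bar>z\<bar> * (2 / \<delta>)) integrable_on S"
  proof -
    have "(\<lambda>t::real. \<bar>z\<bar> * (2 / \<delta>)) integrable_on {0..1}" using integrable_const[of "\<bar>z\<bar> * (2 / \<delta>)" "0::real" 1] by simp
    then show ?thesis unfolding S_def integrable_on_def using hi_S by blast
  qed
  have fS: "f n integrable_on S" for n using fint[of n] hi_S unfolding S_def integrable_on_def by blast
  have lim: "(\<lambda>n. integral S (f n)) \<longlonglongrightarrow> integral S g"
    by (rule dominated_convergence(2)[OF fS hint bound conv])
  have iS: "integral S (f n) = (\<Sum>k<n. a k)" for n
    using fint[of n] hi_S unfolding S_def by (blast intro: integral_unique)
  have gS: "integral S g = I" using g hi_S unfolding S_def g_def[abs_def] by (blast intro: integral_unique)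
  show ?thesis using lim unfolding iS gS sums_def a_def .
qed



lemma aux_s1: "\<lbrakk>(t::real) - r \<noteq> 0; 0 < (d::real)\<rbrakk> \<Longrightarrow> (r-1)/(t-r) + r * ((2*t + (r-2))/d) - r / d = ((r-1) * d + r*(2*t+r-3)*(t-r)) / ((t-r) * d)"
  by (simp add: field_simps)
lemma aux_a1: "(m::real) \<noteq> 0 \<Longrightarrow> (r/m) * ((1/m) / (1 + (p/m)^2)) = r / (p^2 + m^2)"
  by (simp add: field_simps power2_eq_square)

lemma aux_s2: "(K::real) \<noteq> 0 \<Longrightarrow> x * y \<noteq> 0 \<Longrightarrow> (1/K) * q / (- x * y / K) = -(q/(x*y))"
  by (simp add: field_simps)

lemma aux_F: "(c::real) \<noteq> 0 \<Longrightarrow> (-1/(c::real) * ((r-1)/2 * (2*L2) + r*(L1+L2) - (w * A1))) - (-1/c * ((r-1)/2*(2*L1) + r*(2*L2) - (w * A0))) = -1/c * ((L1 - L2) - w * (A1 - A0))"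
  by (simp add: field_simps)

lemma antideriv_integral:
  fixes r m z :: real
  assumes r: "r < 0 \<or> r > 1" and m: "m \<noteq> 0" and m2: "m^2 = r * (3*r - 4) / 4"
    and z: "z = 1 / (r * (r-1)^2)"
  shows "((\<lambda>t. z * (1-t)^2 / (1 - z * t * (1-t)^2)) has_integral
     (-1/(3*r-1)) * (ln (r/(r-1)) - (r/m) * (arctan (r/(2*m)) - arctan ((r-2)/(2*m))))) {0..1}"
proof -
  define D where "D t = t^2 + (r-2)*t + (r-1)^2" for t :: real
  have Deq: "D t = (t - 1 + r/2)^2 + m^2" for t unfolding D_def m2 by (simp add: power2_eq_square field_simps)
  have Dpos: "D t > 0" for t unfolding Deq using m by (simp add: add_nonneg_pos)
  have r3: "3*r - 1 \<noteq> 0" using r by auto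
  have rne: "t \<noteq> r" if "t \<in> {0..1}" for t using that r by auto
  define F where "F t = -1/(3*r-1) * ((r-1)/2 * ln ((t-r)^2) + r * ln (D t) - (r/m) * arctan ((t-1+r/2)/m))" for t
  have deriv: "(F has_real_derivative (z * (1-t)^2 / (1 - z * t * (1-t)^2))) (at t)" if t: "t \<in> {0..1}" for t
  proof -
    have tr: "t - r \<noteq> 0" using rne[OF t] by simp
    have "(F has_real_derivative (-1/(3*r-1) * ((r-1)/2 * (2*(t-r)/(t-r)^2) + r * ((2*t + (r-2))/D t)
           - (r/m) * ((1/m) / (1 + ((t-1+r/2)/m)^2))))) (at t)"
      proof -
        have tt: "0 < (t - r) * (t - r)" using tr by (auto simp add: zero_less_mult_iff)
        have X: "1 + (t - 1 + r/2)*(t-1+r/2)/(m*m) > 0" by (simp add: add_pos_nonneg)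
        show ?thesis
        using tr Dpos[of t] m r3 tt X unfolding F_def[abs_def] D_def
        apply (auto intro!: derivative_eq_intros simp: power2_eq_square)
        apply (simp add: field_simps)
        done
      qed
    moreover have "-1/(3*r-1) * ((r-1)/2 * (2*(t-r)/(t-r)^2) + r * ((2*t + (r-2))/D t)
           - (r/m) * ((1/m) / (1 + ((t-1+r/2)/m)^2))) = z * (1-t)^2 / (1 - z * t * (1-t)^2)"
    proof -
      have a1': "(r/m) * ((1/m) / (1 + ((t-1+r/2)/m)^2)) = r / D t"
        using aux_a1[OF m, of r "t-1+r/2"] unfolding Deq by (simp add: add.commute)
      have a2': "(2*(t-r)/(t-r)^2) = 2/(t-r)" using tr by (simp add: power2_eq_square divide_simps)
      have a2: "(r-1)/2 * (2*(t-r)/(t-r)^2) = (r-1)/(t-r)" unfolding a2' using tr by (simp add: divide_simps algebra_simps)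
      have rr: "r * (r-1)^2 \<noteq> 0" using r by auto
      have den: "1 - z * t * (1-t)^2 = - (t - r) * D t / (r * (r-1)^2)"
        unfolding z D_def using rr by (simp add: field_simps) (simp add: algebra_simps power2_eq_square)
      have key: "(r-1) * D t + r*(2*t+r-3)*(t-r) = (3*r-1)*(t-1)^2"
        unfolding D_def by (simp add: algebra_simps power2_eq_square)
      have s1: "(r-1)/(t-r) + r * ((2*t + (r-2))/D t) - r / D t = ((r-1) * D t + r*(2*t+r-3)*(t-r)) / ((t-r) * D t)"
        by (rule aux_s1[OF tr Dpos])
      have s2: "z * (1-t)^2 / (1 - z * t * (1-t)^2) = -((t-1)^2 / ((t-r) * D t))"
      proof -
        have "z * (1-t)^2 / (1 - z * t * (1-t)^2) = (1/(r*(r-1)^2)) * (t-1)^2 / (- (t - r) * D t / (r * (r-1)^2))"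
          unfolding den by (simp add: z power2_commute)
        also have "\<dots> = -((t-1)^2 / ((t-r) * D t))"
          by (rule aux_s2[OF rr]) (use tr Dpos[of t] in auto)
        finally show ?thesis .
      qed
      show ?thesis unfolding a1' a2 s1 key s2 using r3 by simp
    qed
    ultimately show ?thesis by simp
  qed
  have "((\<lambda>t. z * (1-t)^2 / (1 - z * t * (1-t)^2)) has_integral (F 1 - F 0)) {0..1}"
    apply (rule fundamental_theorem_of_calculus)
     apply simp
    subgoal for x using deriv[of x] by (simp add: has_real_derivative_iff_has_vector_derivative[symmetric] has_field_derivative_at_within)
    done
  moreover have "F 1 - F 0 = (-1/(3*r-1)) * (ln (r/(r-1)) - (r/m) * (arctan (r/(2*m)) - arctan ((r-2)/(2*m))))"
  proof -
    have A: "\<bar>r-1\<bar> > 0" "\<bar>r\<bar> > 0" using r by auto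
    have d1: "ln (D 1) = ln \<bar>r\<bar> + ln \<bar>r-1\<bar>"
    proof -
      have "D 1 = \<bar>r\<bar> * \<bar>r-1\<bar>" unfolding D_def using r by (auto simp: power2_eq_square algebra_simps abs_if)
      then show ?thesis using A by (simp add: ln_mult)
    qed
    have d0: "ln (D 0) = 2 * ln \<bar>r-1\<bar>"
    proof -
      have e: "D 0 = \<bar>r-1\<bar>^2" unfolding D_def by (simp add: power2_eq_square algebra_simps)
      have "ln (D 0) = ln (\<bar>r-1\<bar>^2)" by (simp only: e)
      also have "\<dots> = 2 * ln \<bar>r-1\<bar>" using ln_realpow[of _ 2] by (simp only: of_nat_numeral)
      finally show ?thesis .
    qed
    have l1: "ln ((1-r)^2) = 2 * ln \<bar>r-1\<bar>"
    proof -
      have e: "(1-r)^2 = \<bar>r-1\<bar>^2" by (simp add: power2_eq_square algebra_simps)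
      have "ln ((1-r)^2) = ln (\<bar>r-1\<bar>^2)" by (simp only: e)
      also have "\<dots> = 2 * ln \<bar>r-1\<bar>" using ln_realpow[of _ 2] by (simp only: of_nat_numeral)
      finally show ?thesis .
    qed
    have l0: "ln ((0-r)^2) = 2 * ln \<bar>r\<bar>"
    proof -
      have e: "(0-r)^2 = \<bar>r\<bar>^2" by (simp add: power2_eq_square)
      have "ln ((0-r)^2) = ln (\<bar>r\<bar>^2)" by (simp only: e)
      also have "\<dots> = 2 * ln \<bar>r\<bar>" using ln_realpow[of _ 2] by (simp only: of_nat_numeral)
      finally show ?thesis .
    qed
    have lq: "ln (r/(r-1)) = ln \<bar>r\<bar> - ln \<bar>r-1\<bar>"
    proof -
      have "r/(r-1) = \<bar>r\<bar> / \<bar>r-1\<bar>" using r by (auto simp: abs_if field_simps)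
      then show ?thesis using A by (simp add: ln_div)
    qed
    have at1: "(1 - 1 + r/2)/m = r/(2*m)" by simp
    have at0: "(0 - 1 + r/2)/m = (r-2)/(2*m)" by (simp add: field_simps)
    show ?thesis unfolding F_def at1 at0 d1 d0 l1 l0 lq
      by (rule aux_F[OF r3])
  qed
  ultimately show ?thesis by simp
qed


lemma qpos: "(u::real)^2-u+1 > 0"
proof -
  have "u^2-u+1 = (u-1/2)^2 + 3/4" by (simp add: power2_eq_square field_simps)
  moreover have "(u-1/2)^2 \<ge> 0" by simp
  ultimately show ?thesis by linarith
qed

lemma arctan_deriv_helper:
  assumes "(g has_real_derivative g') (at u)" "1 + (g u)^2 = N" "N \<noteq> 0"
  shows "((\<lambda>u. arctan (g u)) has_real_derivative g' / N) (at u)"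
proof -
  have "((\<lambda>u. arctan (g u)) has_real_derivative inverse (1 + (g u)^2) * g') (at u)"
    by (rule DERIV_chain2[OF DERIV_arctan assms(1)])
  then show ?thesis using assms(2,3) by (simp add: field_simps)
qed

lemma aux_q: "(a::real) \<noteq> 0 \<Longrightarrow> Q \<noteq> 0 \<Longrightarrow> s \<noteq> 0 \<Longrightarrow> (4*Q/(s*a))/(4*Q^2/(3*a)) = 3/(s*Q)"
  by (simp add: field_simps power2_eq_square)

lemma aux_q3: "(a::real) \<noteq> 0 \<Longrightarrow> Q \<noteq> 0 \<Longrightarrow> (-(2 * s)/a)/(4*Q/a) = -s/(2*Q)"
  by (simp add: field_simps)

definition "fA u = arctan ((u+1)/(sqrt 3*(u-1))) - arctan ((u^2-4*u+1)/(sqrt 3*(u^2-1))) - 3*arctan (sqrt 3/(2*u-1))"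

lemma fA_deriv:
  fixes u :: real assumes u: "u > 1 \<or> u < -1"
  shows "(fA has_real_derivative 0) (at u)"
proof -
  define s where "s = sqrt 3"
  have s: "s * s = 3" "s > 0" unfolding s_def by auto
  have sq: "s^2 = 3" using s by (simp add: power2_eq_square)
  define Q where "Q = u^2-u+1"
  have Q: "Q > 0" unfolding Q_def by (rule qpos)
  have ua: "1 < \<bar>u\<bar>" using u by auto
  have "1 < \<bar>u\<bar>^2" using one_less_power[OF ua, of 2] by simp
  then have "u^2 > 1" by simp
  then have u1: "u - 1 \<noteq> 0" "u^2 - 1 \<noteq> 0" "2*u-1 \<noteq> 0" using u by auto
  have D1: "((\<lambda>u. arctan ((u+1)/(s*(u-1)))) has_real_derivative (-s/(2*Q))) (at u)"
  proof -
    have "((\<lambda>u. arctan ((u+1)/(s*(u-1)))) has_real_derivative (-2/(s*(u-1)^2)) / (4*Q/(3*(u-1)^2))) (at u)"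
    proof (rule arctan_deriv_helper)
      show "((\<lambda>u. (u+1)/(s*(u-1))) has_real_derivative (-2/(s*(u-1)^2))) (at u)"
        using u1(1) s(2) by (auto intro!: derivative_eq_intros simp: divide_simps power2_eq_square) (simp add: algebra_simps)
      have h: "((u+1)/(s*(u-1)))^2 = (u+1)^2/(3*(u-1)^2)" by (simp add: power_divide power_mult_distrib sq)
      show "1 + ((u+1)/(s*(u-1)))^2 = 4*Q/(3*(u-1)^2)"
        using u1 unfolding h Q_def by (simp add: divide_simps) (simp add: algebra_simps power2_eq_square)
      show "4*Q/(3*(u-1)^2) \<noteq> 0" using Q u1 by simp
    qed
    moreover have "(-2/(s*(u-1)^2)) / (4*Q/(3*(u-1)^2)) = -s/(2*Q)"
      using u1 Q s by (simp add: field_simps)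
    ultimately show ?thesis by simp
  qed
  have D2: "((\<lambda>u. arctan ((u^2-4*u+1)/(s*(u^2-1)))) has_real_derivative (s/Q)) (at u)"
  proof -
    have "((\<lambda>u. arctan ((u^2-4*u+1)/(s*(u^2-1)))) has_real_derivative (4*Q/(s*(u^2-1)^2)) / (4*Q^2/(3*(u^2-1)^2))) (at u)"
    proof (rule arctan_deriv_helper)
      show "((\<lambda>u. (u^2-4*u+1)/(s*(u^2-1))) has_real_derivative (4*Q/(s*(u^2-1)^2))) (at u)"
        using u1(2) s(2) unfolding Q_def by (auto intro!: derivative_eq_intros simp: divide_simps power2_eq_square) (simp add: algebra_simps)
      have h: "((u^2-4*u+1)/(s*(u^2-1)))^2 = (u^2-4*u+1)^2/(3*(u^2-1)^2)" by (simp add: power_divide power_mult_distrib sq)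
      show "1 + ((u^2-4*u+1)/(s*(u^2-1)))^2 = 4*Q^2/(3*(u^2-1)^2)"
        using u1 unfolding h Q_def by (simp add: divide_simps) (simp add: algebra_simps power2_eq_square)
      show "4*Q^2/(3*(u^2-1)^2) \<noteq> 0" using Q u1 by simp
    qed
    moreover have "(4*Q/(s*(u^2-1)^2)) / (4*Q^2/(3*(u^2-1)^2)) = s/Q"
    proof -
      have "(4*Q/(s*(u^2-1)^2)) / (4*Q^2/(3*(u^2-1)^2)) = 3/(s*Q)"
        by (rule aux_q) (use u1 Q s in auto)
      also have "\<dots> = s/Q" using s Q by (simp add: field_simps)
      finally show ?thesis .
    qed
    ultimately show ?thesis by simp
  qed
  have D3: "((\<lambda>u. arctan (s/(2*u-1))) has_real_derivative (-s/(2*Q))) (at u)"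
  proof -
    have "((\<lambda>u. arctan (s/(2*u-1))) has_real_derivative ((-(2 * s)/(2*u-1)^2) / (4*Q/(2*u-1)^2))) (at u)"
    proof (rule arctan_deriv_helper)
      show "((\<lambda>u. s/(2*u-1)) has_real_derivative (-(2 * s)/(2*u-1)^2)) (at u)"
        using u1(3) by (auto intro!: derivative_eq_intros simp: field_simps power2_eq_square)
      have h: "(s/(2*u-1))^2 = 3/(2*u-1)^2" by (simp add: power_divide sq)
      show "1 + (s/(2*u-1))^2 = 4*Q/(2*u-1)^2"
        using u1 unfolding h Q_def by (simp add: divide_simps) (simp add: algebra_simps power2_eq_square)
      show "4*Q/(2*u-1)^2 \<noteq> 0" using Q u1 by simp
    qed
    moreover have "(-(2 * s)/(2*u-1)^2) / (4*Q/(2*u-1)^2) = -s/(2*Q)"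
      by (rule aux_q3) (use u1 Q in auto)
    ultimately show ?thesis by simp
  qed
  have "(fA has_real_derivative (-s/(2*Q) - s/Q - 3 * (-s/(2*Q)))) (at u)"
    unfolding fA_def[abs_def] s_def[symmetric]
    by (intro derivative_intros D1 D2 DERIV_cmult[OF D3])
  moreover have "-s/(2*Q) - s/Q - 3 * (-s/(2*Q)) = 0" using Q by (simp add: field_simps)
  ultimately show ?thesis by simp
qed

lemma fA_top: "(fA \<longlongrightarrow> 0) at_top"
proof -
  have l1a: "((\<lambda>u::real. (u+1)/(u-1)) \<longlongrightarrow> 1) at_top" by real_asymp
  have l2a: "((\<lambda>u::real. (u^2-4*u+1)/(u^2-1)) \<longlongrightarrow> 1) at_top" by real_asymp
  have l1: "((\<lambda>u::real. (u+1)/(sqrt 3*(u-1))) \<longlongrightarrow> 1/sqrt 3) at_top"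
    using tendsto_divide[OF l1a tendsto_const[of "sqrt 3"]] by (simp add: divide_divide_eq_left mult.commute)
  have l2: "((\<lambda>u::real. (u^2-4*u+1)/(sqrt 3*(u^2-1))) \<longlongrightarrow> 1/sqrt 3) at_top"
    using tendsto_divide[OF l2a tendsto_const[of "sqrt 3"]] by (simp add: divide_divide_eq_left mult.commute)
  have l3: "((\<lambda>u::real. sqrt 3/(2*u-1)) \<longlongrightarrow> 0) at_top" by real_asymp
  have "(fA \<longlongrightarrow> arctan (1/sqrt 3) - arctan (1/sqrt 3) - 3 * arctan 0) at_top"
    unfolding fA_def[abs_def] by (intro tendsto_intros l1 l2 l3)
  then show ?thesis by simp
qed

lemma fA_bot: "(fA \<longlongrightarrow> 0) at_bot"
proof -
  have l1a: "((\<lambda>u::real. (u+1)/(u-1)) \<longlongrightarrow> 1) at_bot" by real_asymp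
  have l2a: "((\<lambda>u::real. (u^2-4*u+1)/(u^2-1)) \<longlongrightarrow> 1) at_bot" by real_asymp
  have l1: "((\<lambda>u::real. (u+1)/(sqrt 3*(u-1))) \<longlongrightarrow> 1/sqrt 3) at_bot"
    using tendsto_divide[OF l1a tendsto_const[of "sqrt 3"]] by (simp add: divide_divide_eq_left mult.commute)
  have l2: "((\<lambda>u::real. (u^2-4*u+1)/(sqrt 3*(u^2-1))) \<longlongrightarrow> 1/sqrt 3) at_bot"
    using tendsto_divide[OF l2a tendsto_const[of "sqrt 3"]] by (simp add: divide_divide_eq_left mult.commute)
  have l3: "((\<lambda>u::real. sqrt 3/(2*u-1)) \<longlongrightarrow> 0) at_bot" by real_asymp
  have "(fA \<longlongrightarrow> arctan (1/sqrt 3) - arctan (1/sqrt 3) - 3 * arctan 0) at_bot"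
    unfolding fA_def[abs_def] by (intro tendsto_intros l1 l2 l3)
  then show ?thesis by simp
qed

lemma fA_zero:
  fixes u :: real assumes u: "u > 1 \<or> u < -1" shows "fA u = 0"
  using u
proof
  assume u: "u > 1"
  obtain c where c: "\<forall>x\<in>{1<..}. fA x = c"
    using has_field_derivative_zero_constant[of "{1<..}" fA]
    by (auto intro: has_field_derivative_at_within fA_deriv)
  have "eventually (\<lambda>x. fA x = c) at_top" using eventually_gt_at_top[of "1::real"] by (rule eventually_mono) (use c in auto)
  then have "((\<lambda>x::real. c) \<longlongrightarrow> 0) at_top" by (rule Lim_transform_eventually[OF fA_top, of "\<lambda>x. c"])
  then have "c = 0" by (simp add: tendsto_const_iff)
  then show ?thesis using c u by auto
next
  assume u: "u < -1"
  obtain c where c: "\<forall>x\<in>{..< -1}. fA x = c"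
    using has_field_derivative_zero_constant[of "{..< -1}" fA]
    by (auto intro: has_field_derivative_at_within fA_deriv)
  have "eventually (\<lambda>x. fA x = c) at_bot" using eventually_gt_at_bot[of "-1::real"] by (rule eventually_mono) (use c in auto)
  then have "((\<lambda>x::real. c) \<longlongrightarrow> 0) at_bot" by (rule Lim_transform_eventually[OF fA_bot, of "\<lambda>x. c"])
  then have "c = 0" by (simp add: tendsto_const_iff)
  then show ?thesis using c u by auto
qed


lemma aux_final0:
  fixes s u v w D L AT :: real
  assumes "s * s = 3" "s \<noteq> 0" "v \<noteq> 0" "D \<noteq> 0" "u \<noteq> 0"
  shows "-1/(D/u) * (-L - (2 * w/(s * v)) * (3 * AT)) = u/(v * D) * (2 * s * w * AT + v * L)"
  using assms by (simp add: field_simps)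

lemma aux_e5: "(u::real) \<noteq> 0 \<Longrightarrow> P \<noteq> 0 \<Longrightarrow> w \<noteq> 0 \<Longrightarrow> (w^2/(3 * u))/(P/(3 * u)) = inverse ((w * P)/w^3)"
  by (simp add: field_simps power2_eq_square power3_eq_cube)

lemma closed_form_u:
  fixes u :: real assumes u: "u > 1 \<or> u < -1"
  shows "((\<lambda>t. (27 * u^3/(u^3+1)^2) * (1-t)^2 / (1 - (27 * u^3/(u^3+1)^2) * t * (1-t)^2)) has_integral
     (u/(u^3-1) * (2 * sqrt 3 * (u+1) * arctan (sqrt 3/(2 * u-1)) + (u-1) * ln ((u^3+1)/(u+1)^3)))) {0..1}"
proof -
  define s where "s = sqrt 3"
  have s: "s * s = 3" "s > 0" unfolding s_def by auto
  have sq: "s^2 = 3" using s by (simp add: power2_eq_square)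
  have ua: "1 < \<bar>u\<bar>" using u by auto
  have "1 < \<bar>u\<bar>^2" using one_less_power[OF ua, of 2] by simp
  then have "u^2 > 1" by simp
  then have u1: "u - 1 \<noteq> 0" "u^2 - 1 \<noteq> 0" "u \<noteq> 0" "u + 1 \<noteq> 0" using u by auto
  have "1 < \<bar>u\<bar>^3" using one_less_power[OF ua, of 3] by simp
  then have "1 < \<bar>u^3\<bar>" by (simp add: power_abs)
  then have u3: "u^3 + 1 \<noteq> 0" "u^3 - 1 \<noteq> 0" by auto
  have Dp: "u^2+u+1 > 0" using qpos[of "-u"] by simp
  define r where "r = (u+1)^2/(3 * u)"
  define m where "m = s * (u^2-1)/(6 * u)"
  have r1: "r - 1 = (u^2-u+1)/(3 * u)" unfolding r_def using u1 by (simp add: field_simps power2_eq_square)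
  have r: "r < 0 \<or> r > 1"
  proof (cases "u > 0")
    case True
    then have "r - 1 > 0" unfolding r1 using qpos[of u] by simp
    then show ?thesis by simp
  next
    case False
    then have "u < 0" using u1 by simp
    moreover have "(u+1)^2 > 0" using u1 by simp
    ultimately have "r < 0" unfolding r_def by (simp add: divide_pos_neg)
    then show ?thesis by simp
  qed
  have m: "m \<noteq> 0" unfolding m_def using u1 s by simp
  have m2: "m^2 = r * (3 * r-4)/4"
  proof -
    have "m^2 = 3 * (u^2-1)^2/(36 * u^2)" unfolding m_def by (simp add: power_divide power_mult_distrib sq)
    also have "\<dots> = r * (3 * r-4)/4" unfolding r_def using u1 by (simp add: field_simps power2_eq_square, (simp add: algebra_simps)?)
    finally show ?thesis .
  qed
  have zr: "27 * u^3/(u^3+1)^2 = 1/(r * (r-1)^2)"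
    unfolding r1 unfolding r_def using u1 u3 by (simp add: field_simps power2_eq_square power3_eq_cube, (simp add: algebra_simps)?)
  have I: "((\<lambda>t. (27 * u^3/(u^3+1)^2) * (1-t)^2 / (1 - (27 * u^3/(u^3+1)^2) * t * (1-t)^2)) has_integral
     (-1/(3 * r-1)) * (ln (r/(r-1)) - (r/m) * (arctan (r/(2 * m)) - arctan ((r-2)/(2 * m))))) {0..1}"
    by (rule antideriv_integral[OF r m m2 zr])
  have e1: "r/(2 * m) = (u+1)/(s * (u-1))" unfolding r_def m_def using u1 s
    by (simp add: field_simps power2_eq_square, (simp add: algebra_simps)?)
  have e2: "(r-2)/(2 * m) = (u^2-4 * u+1)/(s * (u^2-1))" unfolding r_def m_def using u1 s
    by (simp add: field_simps power2_eq_square, (simp add: algebra_simps)?)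
  have e3: "r/m = 2 * (u+1)/(s * (u-1))" unfolding r_def m_def using u1 s
    by (simp add: field_simps power2_eq_square, (simp add: algebra_simps)?)
  have e4: "3 * r-1 = (u^2+u+1)/u" unfolding r_def using u1
    by (simp add: field_simps power2_eq_square, (simp add: algebra_simps)?)
  have e5: "ln (r/(r-1)) = - ln ((u^3+1)/(u+1)^3)"
  proof -
    have f: "u^3+1 = (u+1) * (u^2-u+1)" by (simp add: power2_eq_square power3_eq_cube algebra_simps)
    have "r/(r-1) = inverse ((u^3+1)/(u+1)^3)" unfolding r1 unfolding r_def f
      by (rule aux_e5) (use u1 qpos[of u] in auto)
    then show ?thesis by (simp only: ln_inverse)
  qed
  have e6: "arctan ((u+1)/(s * (u-1))) - arctan ((u^2-4 * u+1)/(s * (u^2-1))) = 3 * arctan (s/(2 * u-1))"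
    using fA_zero[OF u] unfolding fA_def s_def by simp
  have e7: "u^3-1 = (u-1) * (u^2+u+1)" by (simp add: power2_eq_square power3_eq_cube algebra_simps)
  have "(-1/(3 * r-1)) * (ln (r/(r-1)) - (r/m) * (arctan (r/(2 * m)) - arctan ((r-2)/(2 * m))))
     = u/(u^3-1) * (2 * s * (u+1) * arctan (s/(2 * u-1)) + (u-1) * ln ((u^3+1)/(u+1)^3))"
    unfolding e1 e2 e3 e4 e5 e6 e7
    by (rule aux_final0) (use s u1 Dp in auto)
  then show ?thesis using I unfolding s_def by simp
qed


lemma z_range:
  fixes v :: real
  assumes "v > 1 \<or> v \<le> - ((sqrt 2 + 1) ^ 2)"
  shows "-27/4 \<le> 27 * v / (v+1)^2" "27 * v / (v+1)^2 < 27/4"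
proof -
  have s2: "sqrt 2 * sqrt 2 = 2" by simp
  have sp: "sqrt 2 > 0" by simp
  have e: "(sqrt 2 + 1)^2 = 3 + 2 * sqrt 2" using s2 by (simp add: power2_eq_square algebra_simps)
  have vv: "v > 1 \<or> v \<le> -3 - 2 * sqrt 2" using assms unfolding e by simp
  then have vv': "v > 1 \<or> v < -3" using sp by linarith
  have v1: "v + 1 \<noteq> 0" using vv' by auto
  then have pp: "(v+1)^2 > 0" by simp
  have "v^2 + 6 * v + 1 \<ge> 0"
    using assms
  proof
    assume "v > 1" then show ?thesis by (simp add: add_pos_nonneg)
  next
    assume "v \<le> - ((sqrt 2 + 1) ^ 2)"
    then have "v + 3 \<le> - (2 * sqrt 2)" unfolding e by simp
    then have "(2 * sqrt 2)^2 \<le> (-(v+3))^2" by (intro power_mono) auto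
    then have "(2 * sqrt 2)^2 \<le> (v+3)^2" by (simp only: power2_minus)
    then have "8 \<le> (v+3)^2" by (simp add: power_mult_distrib)
    then show ?thesis by (simp add: power2_eq_square algebra_simps)
  qed
  moreover have "(v+1)^2 = v^2 + 2 * v + 1" by (simp add: power2_eq_square algebra_simps)
  ultimately have "-27/4 * (v+1)^2 \<le> 27 * v" by linarith
  then show "-27/4 \<le> 27 * v / (v+1)^2" using pp by (simp add: le_divide_eq)
  have "v \<noteq> 1" using vv' by auto
  then have "(v - 1)^2 > 0" by simp
  moreover have "(v+1)^2 = (v-1)^2 + 4 * v" by (simp add: power2_eq_square algebra_simps)
  ultimately have "27 * v < 27/4 * (v+1)^2" by linarith
  then show "27 * v / (v+1)^2 < 27/4" using pp by (simp add: divide_less_eq)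
qed

lemma aux_z: "(B::real) \<noteq> 0 \<Longrightarrow> 27 * (U * B) * B / (B * W)^2 = 27 * U / W^2"
  by (simp add: field_simps power2_eq_square)

lemma aux_r5: "(b::real) \<noteq> 0 \<Longrightarrow> c * b / (2 * (u * b) - b) = c / (2 * u - 1)"
proof -
  assume b: "b \<noteq> 0"
  have "2 * (u * b) - b = b * (2 * u - 1)" by (simp add: algebra_simps)
  then show ?thesis using b by simp
qed

lemma aux_rhs: "(b::real) \<noteq> 0 \<Longrightarrow> K \<noteq> 0 \<Longrightarrow> (u * b * b)/(b^3 * K) * (c * (b * w) * AT + (b * p) * LN) = u/K * (c * w * AT + p * LN)"
  by (simp add: field_simps power3_eq_cube)

theorem mainTheorem2:
  fixes x y :: real
  assumes "y \<noteq> 0"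
    and "x / y > 1 \<or> x / y \<le> - ((sqrt 2 + 1) ^ 2)"
  shows "(\<lambda>n. let k = Suc n in
            (27 * x * y) ^ k / (real k * (x + y) ^ (2 * k) * real ((3 * k) choose k)))
         sums
         (root 3 (x * y) / (x - y) *
           (2 * sqrt 3 * (root 3 x + root 3 y) *
              arctan (sqrt 3 * root 3 y / (2 * root 3 x - root 3 y))
            + (root 3 x - root 3 y) * ln ((x + y) / (root 3 x + root 3 y) ^ 3)))"
proof -
  define a where "a = root 3 x"
  define b where "b = root 3 y"
  have ax: "x = a^3" unfolding a_def by (simp add: odd_real_root_pow)
  have by': "y = b^3" unfolding b_def by (simp add: odd_real_root_pow)
  have b0: "b \<noteq> 0" using assms(1) by' by auto
  define u where "u = a / b"
  have au: "a = u * b" unfolding u_def using b0 by simp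
  have xu: "x = u^3 * b^3" unfolding ax au by (simp add: power_mult_distrib)
  have t: "x / y = u^3" unfolding xu by' using b0 by simp
  have Dp: "u^2+u+1 > 0" using qpos[of "-u"] by simp
  have Dm: "u^2-u+1 > 0" using qpos[of u] by simp
  have u: "u > 1 \<or> u < -1"
    using assms(2) unfolding t
  proof
    assume "u^3 > 1"
    moreover have "u^3 - 1 = (u-1) * (u^2+u+1)" by (simp add: power2_eq_square power3_eq_cube algebra_simps)
    ultimately have "(u-1) * (u^2+u+1) > 0" by simp
    then show ?thesis using Dp by (simp add: zero_less_mult_iff)
  next
    assume h: "u^3 \<le> - ((sqrt 2 + 1) ^ 2)"
    have "(sqrt 2 + 1)^2 > 1" by (simp add: one_less_power)
    then have "u^3 + 1 < 0" using h by linarith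
    moreover have "u^3 + 1 = (u+1) * (u^2-u+1)" by (simp add: power2_eq_square power3_eq_cube algebra_simps)
    ultimately have "(u+1) * (u^2-u+1) < 0" by simp
    then show ?thesis using Dm by (simp add: mult_less_0_iff)
  qed
  have u3: "u^3 + 1 \<noteq> 0" "u^3 - 1 \<noteq> 0"
  proof -
    have "u^3 + 1 = (u+1) * (u^2-u+1)" "u^3 - 1 = (u-1) * (u^2+u+1)"
      by (simp_all add: power2_eq_square power3_eq_cube algebra_simps)
    then show "u^3 + 1 \<noteq> 0" "u^3 - 1 \<noteq> 0" using u Dp Dm by auto
  qed
  define z where "z = 27 * u^3 / (u^3+1)^2"
  have zr: "-27/4 \<le> z" "z < 27/4" unfolding z_def using z_range[OF assms(2)[unfolded t]] by auto
  have ser: "(\<lambda>n. z^(Suc n) / (real (Suc n) * real ((3 * Suc n) choose (Suc n)))) sums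
     (u/(u^3-1) * (2 * sqrt 3 * (u+1) * arctan (sqrt 3/(2 * u-1)) + (u-1) * ln ((u^3+1)/(u+1)^3)))"
    by (rule series_integral[OF zr closed_form_u[OF u, folded z_def]])
  have xy: "x + y = b^3 * (u^3+1)" unfolding xu by' by (simp add: algebra_simps)
  have xy0: "x + y \<noteq> 0" unfolding xy using b0 u3 by simp
  have zxy: "27 * x * y / (x+y)^2 = z" unfolding z_def xy unfolding xu by'
    by (rule aux_z) (use b0 in simp)
  have terms: "(let k = Suc n in (27 * x * y) ^ k / (real k * (x + y) ^ (2 * k) * real ((3 * k) choose k)))
     = z^(Suc n) / (real (Suc n) * real ((3 * Suc n) choose (Suc n)))" for n
  proof -
    have "(27 * x * y) ^ Suc n / (x + y) ^ (2 * Suc n) = z ^ Suc n"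
      unfolding zxy[symmetric] power_divide power_mult ..
    then show ?thesis unfolding Let_def by (metis (no_types, lifting) divide_divide_eq_left mult.assoc mult.commute)
  qed
  have rhs: "root 3 (x * y) / (x - y) *
           (2 * sqrt 3 * (root 3 x + root 3 y) *
              arctan (sqrt 3 * root 3 y / (2 * root 3 x - root 3 y))
            + (root 3 x - root 3 y) * ln ((x + y) / (root 3 x + root 3 y) ^ 3))
    = u/(u^3-1) * (2 * sqrt 3 * (u+1) * arctan (sqrt 3/(2 * u-1)) + (u-1) * ln ((u^3+1)/(u+1)^3))"
  proof -
    have r1: "root 3 (x * y) = u * b * b" unfolding real_root_mult a_def[symmetric] b_def[symmetric] au by simp
    have r2: "x - y = b^3 * (u^3-1)" unfolding xu by' by (simp add: algebra_simps)
    have r3: "root 3 x + root 3 y = b * (u+1)" unfolding a_def[symmetric] b_def[symmetric] au by (simp add: algebra_simps)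
    have r4: "root 3 x - root 3 y = b * (u-1)" unfolding a_def[symmetric] b_def[symmetric] au by (simp add: algebra_simps)
    have r5: "sqrt 3 * root 3 y / (2 * root 3 x - root 3 y) = sqrt 3/(2 * u-1)"
      unfolding a_def[symmetric] b_def[symmetric] au using b0 by (rule aux_r5)
    have r6: "(x + y) / (root 3 x + root 3 y) ^ 3 = (u^3+1)/(u+1)^3"
      unfolding r3 xy power_mult_distrib using b0 by simp
    show ?thesis unfolding r1 r2 r5 r6 unfolding r3 r4
      by (rule aux_rhs) (use b0 u3 in auto)
  qed
  show ?thesis unfolding terms rhs by (rule ser)
qed

end
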